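(* Let $q=p^a$ with $p$ prime, $\mathcal V=\mathbb F_q$ (so $v=q$), and let $G=N.L\le{\rm A\Gamma L}(1,q)$, where $N$ is the group of all translations of $\mathcal V$ and $L\le{\rm \Gamma L}(1,q)$ is transitive on $\mathcal V\setminus\{0\}$. Let $\gamma\subset\mathcal V$ with $|\gamma|=k$, $1\le k\le v-1$, such that $G_\gamma$ is transitive on $\gamma\times(\mathcal V\setminus\gamma)$, and set $M=G_\gamma\cap N$. Then $k\in\{1,v-1\}$ if and only if $M=1$. *)

theory Defs
  imports "HOL-Computational_Algebra.Primes" "HOL-Library.Cardinality"
begin

definition field_aut :: "('a::field \<Rightarrow> 'a) \<Rightarrow> bool" where
  "field_aut \<sigma> \<longleftrightarrow> bij \<sigma> \<and> (\<forall>x y. \<sigma> (x + y) = \<sigma> x + \<sigma> y) \<and> (\<forall>x y. \<sigma> (x * y) = \<sigma> x * \<sigma> y)"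

definition GammaL1 :: "('a::field \<Rightarrow> 'a) set" where
  "GammaL1 = {f. \<exists>a \<sigma>. a \<noteq> 0 \<and> field_aut \<sigma> \<and> f = (\<lambda>x. a * \<sigma> x)}"

definition transl_group :: "('a::ab_group_add \<Rightarrow> 'a) set" where
  "transl_group = {f. \<exists>b. f = (\<lambda>x. x + b)}"

definition perm_subgroup :: "('a \<Rightarrow> 'a) set \<Rightarrow> bool" where
  "perm_subgroup H \<longleftrightarrow> (\<forall>f\<in>H. bij f) \<and> id \<in> H \<and> (\<forall>f\<in>H. \<forall>g\<in>H. f \<circ> g \<in> H)
     \<and> (\<forall>f\<in>H. inv f \<in> H)"

definition transl_ext :: "('a::ab_group_add \<Rightarrow> 'a) set \<Rightarrow> ('a \<Rightarrow> 'a) set" where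
  "transl_ext L = {g. \<exists>f\<in>L. \<exists>b. g = (\<lambda>x. f x + b)}"

definition set_stab :: "('a \<Rightarrow> 'a) set \<Rightarrow> 'a set \<Rightarrow> ('a \<Rightarrow> 'a) set" where
  "set_stab G \<gamma> = {g\<in>G. g ` \<gamma> = \<gamma>}"

definition transitive_on_pairs :: "('a \<Rightarrow> 'a) set \<Rightarrow> 'a set \<Rightarrow> 'a set \<Rightarrow> bool" where
  "transitive_on_pairs H A B \<longleftrightarrow>
     (\<forall>x\<in>A. \<forall>y\<in>B. \<forall>x'\<in>A. \<forall>y'\<in>B. \<exists>g\<in>H. g x = x' \<and> g y = y')"

end

theory Submission
  imports Defs "HOL-Algebra.Algebraic_Closure_Type"
begin

hide_const (open) Divisibility.prime

lemma gen_exists: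
  "\<exists>w::'a::{finite,field}. \<forall>z. z \<noteq> 0 \<longrightarrow> (\<exists>n::nat. z = w ^ n)"
proof -
  let ?R = "ring_of_type_algebra :: 'a ring"
  interpret R: field ?R by (rule field_from_type_algebra)
  have pw: "x [^]\<^bsub>?R\<^esub> (n::nat) = x ^ n" for x :: 'a and n :: nat
    by (induction n) (simp_all add: ring_of_type_algebra_def mult.commute)
  have "\<exists>a\<in>carrier ?R - {\<zero>\<^bsub>?R\<^esub>}. carrier ?R - {\<zero>\<^bsub>?R\<^esub>} = {a[^]\<^bsub>?R\<^esub>i | i::nat . i \<in> UNIV}"
    using R.finite_field_mult_group_has_gen by (simp add: ring_of_type_algebra_def)
  then obtain a where g: "carrier ?R - {\<zero>\<^bsub>?R\<^esub>} = {a[^]\<^bsub>?R\<^esub>i | i::nat . i \<in> UNIV}" by blast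
  have "\<forall>z. z \<noteq> 0 \<longrightarrow> (\<exists>n::nat. z = a ^ n)"
  proof (intro allI impI)
    fix z :: 'a assume "z \<noteq> 0"
    hence "z \<in> carrier ?R - {\<zero>\<^bsub>?R\<^esub>}" by (simp add: ring_of_type_algebra_def)
    then obtain i :: nat where "z = a[^]\<^bsub>?R\<^esub>i" using g by blast
    thus "\<exists>n. z = a ^ n" using pw[of a i] by blast
  qed
  thus ?thesis by blast
qed

lemma aut_0: "field_aut \<sigma> \<Longrightarrow> \<sigma> 0 = 0"
  unfolding field_aut_def by (metis add_cancel_right_right add_0)

lemma aut_1: assumes "field_aut \<sigma>" shows "\<sigma> 1 = 1"
proof -
  have i: "inj \<sigma>" using assms unfolding field_aut_def bij_def by blast
  have "\<sigma> 1 \<noteq> 0" using aut_0[OF assms] i by (metis injD one_neq_zero)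
  moreover have "\<sigma> 1 = \<sigma> 1 * \<sigma> 1" using assms unfolding field_aut_def by (metis mult_1)
  ultimately show ?thesis by (metis mult_cancel_left1)
qed

lemma aut_add: "field_aut \<sigma> \<Longrightarrow> \<sigma> (x + y) = \<sigma> x + \<sigma> y"
  unfolding field_aut_def by blast

lemma aut_mult: "field_aut \<sigma> \<Longrightarrow> \<sigma> (x * y) = \<sigma> x * \<sigma> y"
  unfolding field_aut_def by blast

lemma aut_pow: "field_aut \<sigma> \<Longrightarrow> \<sigma> (x ^ n) = \<sigma> x ^ n"
  by (induction n) (simp_all add: aut_1 aut_mult)

lemma aut_inj: "field_aut \<sigma> \<Longrightarrow> \<sigma> x = \<sigma> y \<Longrightarrow> x = y"
  unfolding field_aut_def bij_def by (meson injD)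

lemma GL_form: "f \<in> GammaL1 \<Longrightarrow> \<exists>a \<sigma>. a \<noteq> 0 \<and> field_aut \<sigma> \<and> f = (\<lambda>x. a * \<sigma> x)"
  unfolding GammaL1_def by blast

lemma GL_add: "f \<in> GammaL1 \<Longrightarrow> f (x + y) = f x + f y"
proof -
  assume "f \<in> GammaL1"
  then obtain a \<sigma> where "field_aut \<sigma>" "f = (\<lambda>x. a * \<sigma> x)" using GL_form by blast
  thus ?thesis by (simp add: aut_add distrib_left)
qed

lemma GL_diff: "f \<in> GammaL1 \<Longrightarrow> f (x - y) = f x - f y"
  by (metis GL_add diff_add_cancel eq_diff_eq)

lemma G_form:
  assumes "L \<subseteq> GammaL1" "g \<in> transl_ext L"
  shows "\<exists>a \<sigma> b. a \<noteq> 0 \<and> field_aut \<sigma> \<and> (\<forall>x. g x = a * \<sigma> x + b)"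
proof -
  obtain f b where f: "f \<in> L" "g = (\<lambda>x. f x + b)" using assms(2) unfolding transl_ext_def by blast
  obtain a \<sigma> where "a \<noteq> 0" "field_aut \<sigma>" "f = (\<lambda>x. a * \<sigma> x)" using GL_form f(1) assms(1) by blast
  thus ?thesis using f by auto
qed

lemma G_bij:
  fixes g :: "'a::{finite,field} \<Rightarrow> 'a"
  assumes "L \<subseteq> GammaL1" "g \<in> transl_ext L"
  shows "bij g"
proof -
  obtain a \<sigma> b where h: "a \<noteq> 0" "field_aut \<sigma>" "\<forall>x. g x = a * \<sigma> x + b"
    using G_form[OF assms] by blast
  have "inj g"
  proof (rule injI)
    fix x y assume "g x = g y"
    hence "\<sigma> x = \<sigma> y" using h by auto
    thus "x = y" using aut_inj h(2) by blast
  qed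
  moreover have "surj g" using finite_UNIV_inj_surj[OF _ \<open>inj g\<close>] by simp
  ultimately show ?thesis unfolding bij_def by blast
qed

lemma G_comp:
  assumes "perm_subgroup L" "L \<subseteq> GammaL1" "g1 \<in> transl_ext L" "g2 \<in> transl_ext L"
  shows "g1 \<circ> g2 \<in> transl_ext L"
proof -
  obtain f1 b1 where f1: "f1 \<in> L" "g1 = (\<lambda>x. f1 x + b1)" using assms(3) unfolding transl_ext_def by blast
  obtain f2 b2 where f2: "f2 \<in> L" "g2 = (\<lambda>x. f2 x + b2)" using assms(4) unfolding transl_ext_def by blast
  have "f1 \<circ> f2 \<in> L" using assms(1) f1 f2 unfolding perm_subgroup_def by blast
  moreover have "g1 \<circ> g2 = (\<lambda>x. (f1 \<circ> f2) x + (f1 b2 + b1))"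
  proof -
    have "f1 \<in> GammaL1" using f1 assms(2) by blast
    thus ?thesis using f1 f2 by (simp add: fun_eq_iff GL_add add.assoc)
  qed
  ultimately show ?thesis unfolding transl_ext_def by blast
qed

lemma G_inv:
  fixes g :: "'a::{finite,field} \<Rightarrow> 'a"
  assumes "perm_subgroup L" "L \<subseteq> GammaL1" "g \<in> transl_ext L"
  shows "inv_into UNIV g \<in> transl_ext L"
proof -
  obtain f b where f: "f \<in> L" "g = (\<lambda>x. f x + b)" using assms(3) unfolding transl_ext_def by blast
  have bf: "bij f" using assms(1) f(1) unfolding perm_subgroup_def by blast
  have fG: "f \<in> GammaL1" using f assms(2) by blast
  have il: "inv_into UNIV f \<in> L" using assms(1) f(1) unfolding perm_subgroup_def by blast
  hence iG: "inv_into UNIV f \<in> GammaL1" using assms(2) by blast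
  have "inv_into UNIV g = (\<lambda>y. inv_into UNIV f y + (- inv_into UNIV f b))"
  proof (rule inv_equality)
    fix x show "inv_into UNIV f (g x) + - inv_into UNIV f b = x"
      using f(2) GL_add[OF iG] bf by (simp add: bij_is_inj)
  next
    fix y show "g (inv_into UNIV f y + - inv_into UNIV f b) = y"
      using f(2) GL_add[OF fG] GL_diff[OF fG] bf
      by (simp add: bij_is_surj surj_f_inv_f)
  qed
  thus ?thesis using il unfolding transl_ext_def by blast
qed

theorem lemma6p2:
  fixes L :: "('a::{finite,field} \<Rightarrow> 'a) set"
    and \<gamma> :: "'a set" and p e k :: nat
  assumes "prime p" and "e \<ge> 1" and "CARD('a) = p ^ e"
    and "perm_subgroup L" and "L \<subseteq> GammaL1"
    and "\<forall>x\<in>UNIV - {0}. \<forall>y\<in>UNIV - {0}. \<exists>f\<in>L. f x = y"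
    and "card \<gamma> = k" and "1 \<le> k" and "k \<le> CARD('a) - 1"
    and "transitive_on_pairs (set_stab (transl_ext L) \<gamma>) \<gamma> (UNIV - \<gamma>)"
  shows "k \<in> {1, CARD('a) - 1} \<longleftrightarrow> set_stab (transl_ext L) \<gamma> \<inter> transl_group = {id}"
proof -
  define G where "G = transl_ext L"
  define H where "H = set_stab G \<gamma>"
  note LG = assms(4) assms(5)
  have Hform: "\<exists>a \<sigma> b. a \<noteq> 0 \<and> field_aut \<sigma> \<and> (\<forall>x. g x = a * \<sigma> x + b)" if "g \<in> H" for g
    using G_form[OF assms(5)] that unfolding H_def G_def set_stab_def by blast
  have Hbij: "bij g" if "g \<in> H" for g
    using G_bij[OF assms(5)] that unfolding H_def G_def set_stab_def by blast
  have Himg: "g ` \<gamma> = \<gamma>" if "g \<in> H" for g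
    using that unfolding H_def set_stab_def by blast
  have Hcomp: "g1 \<circ> g2 \<in> H" if "g1 \<in> H" "g2 \<in> H" for g1 g2
  proof -
    have "(g1 \<circ> g2) ` \<gamma> = \<gamma>" using Himg[OF that(1)] Himg[OF that(2)] by (metis image_comp)
    thus ?thesis using G_comp[OF LG] that unfolding H_def G_def set_stab_def by auto
  qed
  have Hinv: "inv_into UNIV g \<in> H" if "g \<in> H" for g
  proof -
    have "inv_into UNIV g ` \<gamma> = \<gamma>"
    proof -
      have "inj g" using Hbij[OF that] bij_is_inj by blast
      hence "inv_into UNIV g ` (g ` \<gamma>) = \<gamma>" by (rule image_inv_f_f)
      thus ?thesis using Himg[OF that] by simp
    qed
    thus ?thesis using G_inv[OF LG] that unfolding H_def G_def set_stab_def by blast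
  qed
  have idL: "id \<in> L" using assms(4) unfolding perm_subgroup_def by blast
  have idH: "id \<in> H"
  proof -
    have "id = (\<lambda>x. id x + (0::'a))" by auto
    hence "id \<in> G" using idL unfolding G_def transl_ext_def by blast
    thus ?thesis unfolding H_def set_stab_def by auto
  qed
  have idT: "(id::'a\<Rightarrow>'a) \<in> transl_group"
    unfolding transl_group_def by (rule CollectI, rule exI[of _ 0]) (auto simp: fun_eq_iff)
  have fin: "finite A" for A :: "'a set" by simp
  have cardC: "card (UNIV - \<gamma>) = CARD('a) - k"
    using assms(7) by (simp add: card_Diff_subset)
  have trans: "\<forall>x\<in>\<gamma>. \<forall>y\<in>UNIV - \<gamma>. \<forall>x'\<in>\<gamma>. \<forall>y'\<in>UNIV - \<gamma>. \<exists>g\<in>H. g x = x' \<and> g y = y'"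
    using assms(10) unfolding transitive_on_pairs_def H_def G_def by blast
  show ?thesis
  proof
    assume k: "k \<in> {1, CARD('a) - 1}"
    show "set_stab (transl_ext L) \<gamma> \<inter> transl_group = {id}"
    proof
      show "{id} \<subseteq> set_stab (transl_ext L) \<gamma> \<inter> transl_group"
        using idH idT unfolding H_def G_def by blast
      show "set_stab (transl_ext L) \<gamma> \<inter> transl_group \<subseteq> {id}"
      proof
        fix g assume g: "g \<in> set_stab (transl_ext L) \<gamma> \<inter> transl_group"
        then obtain b where gb: "g = (\<lambda>x. x + b)" unfolding transl_group_def by blast
        have gH: "g \<in> H" using g unfolding H_def G_def by blast
        have "b = 0"
        proof (cases "k = 1")
          case True
          then obtain x0 where "\<gamma> = {x0}" using assms(7) card_1_singletonE by blast
          thus ?thesis using Himg[OF gH] gb by auto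
        next
          case False
          hence "card (UNIV - \<gamma>) = 1" using k cardC assms(9) by auto
          then obtain y0 where y0: "UNIV - \<gamma> = {y0}" using card_1_singletonE by blast
          have "g ` (- \<gamma>) = - \<gamma>" using Himg[OF gH] Hbij[OF gH] by (simp add: bij_image_Compl_eq)
          thus ?thesis using y0 gb by (auto simp: Compl_eq_Diff_UNIV)
        qed
        thus "g \<in> {id}" using gb by (auto simp: fun_eq_iff)
      qed
    qed
  next
    assume M: "set_stab (transl_ext L) \<gamma> \<inter> transl_group = {id}"
    have Mtriv: "g = id" if "g \<in> H" "\<forall>x. g x = x + b" for g b
    proof -
      have "g = (\<lambda>x. x + b)" using that by auto
      hence "g \<in> transl_group" unfolding transl_group_def by blast
      thus ?thesis using M that(1) unfolding H_def G_def by blast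
    qed
    show "k \<in> {1, CARD('a) - 1}"
    proof (rule ccontr)
      assume nk: "k \<notin> {1, CARD('a) - 1}"
      have k2: "2 \<le> k" using nk assms(8) by auto
      have kc2: "2 \<le> CARD('a) - k" using nk assms(9) by auto
      have other1: "\<exists>x\<in>\<gamma>. x \<noteq> c" for c
      proof (rule ccontr)
        assume "\<not> ?thesis" hence "\<gamma> \<subseteq> {c}" by blast
        hence "card \<gamma> \<le> 1" using card_mono[of "{c}" \<gamma>] by simp
        thus False using k2 assms(7) by simp
      qed
      have other2: "\<exists>y\<in>UNIV - \<gamma>. y \<noteq> c" for c
      proof (rule ccontr)
        assume "\<not> ?thesis" hence "UNIV - \<gamma> \<subseteq> {c}" by blast
        hence "card (UNIV - \<gamma>) \<le> 1" using card_mono[of "{c}" "UNIV - \<gamma>"] by simp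
        thus False using kc2 cardC by simp
      qed
      obtain x1 where x1: "x1 \<in> \<gamma>" using other1 by blast
      obtain y1 where y1: "y1 \<in> UNIV - \<gamma>" using other2 by blast
      have samelin: "f1 = f2" if "f1 \<in> H" "f2 \<in> H" "\<forall>z. f1 z = f2 z + d" for f1 f2 d
      proof -
        define u where "u = f1 \<circ> inv_into UNIV f2"
        have uH: "u \<in> H" unfolding u_def using Hcomp Hinv that by blast
        have su: "surj f2" using Hbij[OF that(2)] bij_is_surj by blast
        have "\<forall>z. u z = z + d" unfolding u_def using that(3) su by (simp add: surj_f_inv_f)
        hence "u = id" "\<forall>z. u z = z + d" using Mtriv[OF uH] by auto
        hence "d = 0" by (metis add_0 id_apply)
        thus ?thesis using that(3) by auto
      qed
      have fixall: False if "\<forall>g\<in>H. g c = c" for c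
      proof (cases "c \<in> \<gamma>")
        case True
        obtain x where "x \<in> \<gamma>" "x \<noteq> c" using other1 by blast
        then obtain g where "g \<in> H" "g c = x" using trans True y1 by blast
        thus False using that \<open>x \<noteq> c\<close> by auto
      next
        case False
        obtain y where "y \<in> UNIV - \<gamma>" "y \<noteq> c" using other2 by blast
        then obtain g where "g \<in> H" "g c = y" using trans False x1 by blast
        thus False using that \<open>y \<noteq> c\<close> by auto
      qed
      show False
      proof (cases "\<exists>h\<in>H. h \<noteq> id \<and> (\<exists>\<alpha> \<beta>. \<forall>z. h z = \<alpha> * z + \<beta>)")
        case True
        then obtain h \<alpha> \<beta> where h: "h \<in> H" "h \<noteq> id" "\<forall>z. h z = \<alpha> * z + \<beta>" by blast
        have a1: "\<alpha> \<noteq> 1"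
        proof
          assume "\<alpha> = 1" hence "h = id" using Mtriv[OF h(1), of \<beta>] h(3) by auto
          thus False using h(2) by blast
        qed
        define c where "c = \<beta> / (1 - \<alpha>)"
        have hc: "h c = c" using a1 h(3) unfolding c_def by (simp add: field_simps)
        have huniq: "z = c" if "h z = z" for z
        proof -
          have "z * (1 - \<alpha>) = \<beta>" using that h(3) by (simp add: algebra_simps)
          thus ?thesis using a1 unfolding c_def by (simp add: field_simps)
        qed
        have "\<forall>g\<in>H. g c = c"
        proof
          fix g assume gH: "g \<in> H"
          obtain a \<sigma> b where g: "a \<noteq> 0" "field_aut \<sigma>" "\<forall>x. g x = a * \<sigma> x + b"
            using Hform[OF gH] by blast
          define kk where "kk = g \<circ> h \<circ> inv_into UNIV g"
          have kkH: "kk \<in> H" unfolding kk_def using Hcomp Hinv gH h(1) by blast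
          have sg: "surj g" using Hbij[OF gH] bij_is_surj by blast
          have kkf: "kk z = \<sigma> \<alpha> * (z - b) + (a * \<sigma> \<beta> + b)" for z
          proof -
            define w where "w = inv_into UNIV g z"
            have gw: "g w = z" unfolding w_def using sg by (simp add: surj_f_inv_f)
            have "kk z = g (h w)" unfolding kk_def w_def by simp
            also have "\<dots> = a * (\<sigma> \<alpha> * \<sigma> w + \<sigma> \<beta>) + b" using g h(3) by (simp add: aut_add aut_mult)
            also have "\<dots> = \<sigma> \<alpha> * (a * \<sigma> w) + (a * \<sigma> \<beta> + b)" by (simp add: algebra_simps)
            also have "a * \<sigma> w = z - b" using gw g(3) by (metis add_diff_cancel_right')
            finally show ?thesis .
          qed
          define sa where "sa = \<sigma> \<alpha>"
          define D where "D = a * \<sigma> \<beta> + b"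
          have kkf': "kk z = sa * (z - b) + D" for z using kkf unfolding sa_def D_def by simp
          have comm: "h \<circ> kk = kk \<circ> h"
          proof (rule samelin)
            show "h \<circ> kk \<in> H" "kk \<circ> h \<in> H" using Hcomp h(1) kkH by auto
            show "\<forall>z. (h \<circ> kk) z = (kk \<circ> h) z +
              ((\<alpha> * (sa * (0 - b) + D) + \<beta>) - (sa * (\<beta> - b) + D))"
            proof
              fix z
              have e1: "(h \<circ> kk) z = \<alpha> * (sa * (z - b) + D) + \<beta>" using h(3) kkf'[of z] by simp
              have e2: "(kk \<circ> h) z = sa * ((\<alpha> * z + \<beta>) - b) + D" using h(3) kkf'[of "h z"] by simp
              show "(h \<circ> kk) z = (kk \<circ> h) z +
                ((\<alpha> * (sa * (0 - b) + D) + \<beta>) - (sa * (\<beta> - b) + D))"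
                unfolding e1 e2 by (simp add: algebra_simps)
            qed
          qed
          have "h (kk c) = kk c" using fun_cong[OF comm, of c] hc by simp
          hence kc: "kk c = c" using huniq by blast
          define w where "w = inv_into UNIV g c"
          have gw: "g w = c" unfolding w_def using sg by (simp add: surj_f_inv_f)
          have "g (h w) = g w" using kc gw unfolding kk_def w_def by simp
          hence "h w = w" using Hbij[OF gH] by (meson bij_is_inj injD)
          hence "w = c" using huniq by blast
          thus "g c = c" using gw by simp
        qed
        thus False using fixall by blast
      next
        case False
        hence noaff: "h = id" if "h \<in> H" "\<forall>z. h z = \<alpha> * z + \<beta>" for h \<alpha> \<beta>
          using that by blast
        obtain \<omega> :: 'a where om: "\<forall>z. z \<noteq> 0 \<longrightarrow> (\<exists>n::nat. z = \<omega> ^ n)" using gen_exists by blast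
        have "\<omega> \<noteq> 0"
        proof
          assume "\<omega> = 0"
          have "z \<in> {0, 1}" for z :: 'a
          proof (cases "z = 0")
            case False
            then obtain n where "z = \<omega> ^ n" using om by blast
            thus ?thesis using \<open>\<omega> = 0\<close> by (cases n) auto
          qed simp
          hence "(UNIV::'a set) \<subseteq> {0, 1}" by blast
          hence "CARD('a) \<le> card {0::'a, 1}" by (intro card_mono) simp_all
          hence "CARD('a) \<le> 2" by simp
          thus False using k2 kc2 by linarith
        qed
        define \<Phi> where "\<Phi> g = (g \<omega> - g 0) / (g 1 - g 0)" for g :: "'a \<Rightarrow> 'a"
        have Phi: "\<Phi> g = \<sigma> \<omega>" if "a \<noteq> 0" "field_aut \<sigma>" "\<forall>x. g x = a * \<sigma> x + b" for g a \<sigma> b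
          using that unfolding \<Phi>_def by (simp add: aut_0 aut_1)
        have inj: "inj_on \<Phi> H"
        proof (rule inj_onI)
          fix g1 g2 assume g1H: "g1 \<in> H" and g2H: "g2 \<in> H" and eq: "\<Phi> g1 = \<Phi> g2"
          obtain a1 \<sigma>1 b1 where g1: "a1 \<noteq> 0" "field_aut \<sigma>1" "\<forall>x. g1 x = a1 * \<sigma>1 x + b1"
            using Hform[OF g1H] by blast
          obtain a2 \<sigma>2 b2 where g2: "a2 \<noteq> 0" "field_aut \<sigma>2" "\<forall>x. g2 x = a2 * \<sigma>2 x + b2"
            using Hform[OF g2H] by blast
          have so: "\<sigma>1 \<omega> = \<sigma>2 \<omega>" using eq Phi[OF g1] Phi[OF g2] by simp
          have seq: "\<sigma>1 z = \<sigma>2 z" for z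
          proof (cases "z = 0")
            case True thus ?thesis using aut_0[OF g1(2)] aut_0[OF g2(2)] by simp
          next
            case False
            then obtain n where "z = \<omega> ^ n" using om by blast
            thus ?thesis using so aut_pow[OF g1(2)] aut_pow[OF g2(2)] by simp
          qed
          define u where "u = g1 \<circ> inv_into UNIV g2"
          have uH: "u \<in> H" unfolding u_def using Hcomp Hinv g1H g2H by blast
          have sg: "surj g2" using Hbij[OF g2H] bij_is_surj by blast
          have "u z = (a1 / a2) * z + (b1 - a1 / a2 * b2)" for z
          proof -
            define w where "w = inv_into UNIV g2 z"
            have gw: "g2 w = z" unfolding w_def using sg by (simp add: surj_f_inv_f)
            hence s2: "\<sigma>2 w = (z - b2) / a2" using g2 by (simp add: field_simps)
            have "u z = a1 * \<sigma>2 w + b1" unfolding u_def w_def using g1(3) seq by simp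
            thus ?thesis unfolding s2 using g2(1) by (simp add: field_simps)
          qed
          hence "u = id" using noaff[OF uH] by blast
          show "g1 = g2"
          proof
            fix x
            have "g1 x = u (g2 x)" unfolding u_def using Hbij[OF g2H] by (simp add: bij_is_inj)
            thus "g1 x = g2 x" using \<open>u = id\<close> by simp
          qed
        qed
        have img: "\<Phi> ` H \<subseteq> UNIV - {0}"
        proof
          fix t assume "t \<in> \<Phi> ` H"
          then obtain g where gH: "g \<in> H" "t = \<Phi> g" by blast
          obtain a \<sigma> b where g: "a \<noteq> 0" "field_aut \<sigma>" "\<forall>x. g x = a * \<sigma> x + b"
            using Hform[OF gH(1)] by blast
          have "\<sigma> \<omega> \<noteq> 0" using \<open>\<omega> \<noteq> 0\<close> aut_inj[OF g(2), of \<omega> 0] aut_0[OF g(2)] by auto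
          thus "t \<in> UNIV - {0}" using gH(2) Phi[OF g] by simp
        qed
        have finH: "finite H" by simp
        have c1: "card H \<le> CARD('a) - 1"
          using card_inj_on_le[OF inj img] by simp
        have "\<gamma> \<times> (UNIV - \<gamma>) \<subseteq> (\<lambda>g. (g x1, g y1)) ` H"
        proof
          fix pr assume "pr \<in> \<gamma> \<times> (UNIV - \<gamma>)"
          then obtain x y where "pr = (x, y)" "x \<in> \<gamma>" "y \<in> UNIV - \<gamma>" by blast
          then obtain g where "g \<in> H" "g x1 = x" "g y1 = y" using trans x1 y1 by blast
          thus "pr \<in> (\<lambda>g. (g x1, g y1)) ` H" using \<open>pr = (x, y)\<close> by force
        qed
        hence "card (\<gamma> \<times> (UNIV - \<gamma>)) \<le> card ((\<lambda>g. (g x1, g y1)) ` H)"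
          by (intro card_mono) simp_all
        also have "\<dots> \<le> card H" using card_image_le[OF finH] by blast
        finally have "card (\<gamma> \<times> (UNIV - \<gamma>)) \<le> card H" .
        hence c2: "k * (CARD('a) - k) \<le> CARD('a) - 1" using c1 cardC assms(7) by (simp add: card_cartesian_product)
        define j where "j = CARD('a) - k"
        have "2 * j \<le> k * j" using k2 by simp
        moreover have "2 * k \<le> k * j" using kc2 unfolding j_def by simp
        moreover have "CARD('a) = k + j" using kc2 unfolding j_def by simp
        ultimately have "k * j \<le> k + j - 1" "2 * j \<le> k * j" "2 * k \<le> k * j"
          using c2 unfolding j_def[symmetric] by simp_all
        thus False using k2 by arith
      qed
    qed
  qed
qed

end
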